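(* Let $\rho>\chi>1$ and suppose there exists a $(\rho,\chi)$-bidding profile $G$. Let $\phi:(0,1]\to[1,\infty)$ be the function inducing $G$ (i.e. $\phi=G|_{(0,1]}$). Then there exists a tight $(\rho,\chi')$-bidding profile $G'$ induced by $\phi$ with $\chi'\le\chi$.
   Context: Given $1<\chi\le\rho$, a $(\rho,\chi)$-bidding profile is a non-decreasing, left-continuous $G:\mathbb{R}\to(0,\infty)$ such that (offset) $G(x)<1$ for $x<0$ and $G(x)\ge 1$ for $x>0$; (robustness) $\int_{-\infty}^{x+1}G(t)\,\mathrm{d} t\le\rho G(x)$ for all $x\in\mathbb{R}$; (consistency) $\int_{-\infty}^1G(t)\,\mathrm{d} t\le\chi$. A bidding profile $G$ is induced by $\phi:(0,1]\to[1,\infty)$ if $G|_{(0,1]}\equiv\phi$. A $(\rho,\chi)$-bidding profile $G$ is tight if additionally $\int_{-\infty}^{x+1}G(t)\,\mathrm{d} t=\rho\,G(x)$ for all $x\le 0$ and $\int_{-\infty}^1G(t)\,\mathrm{d} t=\chi$. *)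

theory Defs
  imports "HOL-Analysis.Analysis"
begin

definition lower_integral :: "(real \<Rightarrow> real) \<Rightarrow> real \<Rightarrow> ennreal" where
  "lower_integral G a = (\<integral>\<^sup>+ t. ennreal (G t) * indicator {..a} t \<partial>lborel)"

definition bidding_profile :: "real \<Rightarrow> real \<Rightarrow> (real \<Rightarrow> real) \<Rightarrow> bool" where
  "bidding_profile rho chi G \<longleftrightarrow>
     1 < chi \<and> chi \<le> rho \<and>
     mono G \<and>
     (\<forall>x. continuous (at_left x) G) \<and>
     (\<forall>x. 0 < G x) \<and>
     (\<forall>x<0. G x < 1) \<and> (\<forall>x>0. G x \<ge> 1) \<and>
     (\<forall>x. lower_integral G (x + 1) \<le> ennreal (rho * G x)) \<and>
     lower_integral G 1 \<le> ennreal chi"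

definition tight_bidding_profile :: "real \<Rightarrow> real \<Rightarrow> (real \<Rightarrow> real) \<Rightarrow> bool" where
  "tight_bidding_profile rho chi G \<longleftrightarrow>
     bidding_profile rho chi G \<and>
     (\<forall>x\<le>0. lower_integral G (x + 1) = ennreal (rho * G x)) \<and>
     lower_integral G 1 = ennreal chi"

definition induced_by :: "(real \<Rightarrow> real) \<Rightarrow> (real \<Rightarrow> real) \<Rightarrow> bool" where
  "induced_by G \<phi> \<longleftrightarrow> (\<forall>x\<in>{0<..1}. G x = \<phi> x)"

end

theory Submission
  imports Defs
begin

lemma li_mono:
  assumes "\<And>t. F t \<le> H t"
  shows "lower_integral F a \<le> lower_integral H a"
  unfolding lower_integral_def
  by (intro nn_integral_mono mult_right_mono) (auto intro: ennreal_leI assms)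

lemma li_mono_a:
  assumes "a \<le> b"
  shows "lower_integral F a \<le> lower_integral F b"
  unfolding lower_integral_def
  using assms by (intro nn_integral_mono mult_left_mono) (auto simp: indicator_def)

lemma li_lower:
  assumes "c \<ge> 0" "a \<le> b" "\<And>t. a \<le> t \<Longrightarrow> t \<le> b \<Longrightarrow> c \<le> F t"
  shows "ennreal (c*(b-a)) \<le> lower_integral F b"
proof -
  have "ennreal (c*(b-a)) = (\<integral>\<^sup>+ t. ennreal c * indicator {a..b} t \<partial>lborel)"
    using assms by (simp add: nn_integral_cmult_indicator ennreal_mult)
  also have "\<dots> \<le> lower_integral F b"
    unfolding lower_integral_def
    using assms by (intro nn_integral_mono) (auto simp: indicator_def intro: ennreal_leI)
  finally show ?thesis .
qed

lemma li_split:
  assumes "mono F" "s \<le> x" "K \<ge> 0" "\<And>t. s < t \<Longrightarrow> t \<le> x \<Longrightarrow> F t \<le> K"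
  shows "lower_integral F x \<le> lower_integral F s + ennreal (K*(x-s))"
proof -
  have m: "(\<lambda>t. ennreal (F t)) \<in> borel_measurable lborel"
    using borel_measurable_mono[OF assms(1)] by (simp add: measurable_ennreal)
  have "lower_integral F x \<le> (\<integral>\<^sup>+ t. ennreal (F t) * indicator {..s} t + ennreal K * indicator {s..x} t \<partial>lborel)"
    unfolding lower_integral_def
    using assms by (intro nn_integral_mono) (auto simp: indicator_def intro: ennreal_leI)
  also have "\<dots> = lower_integral F s + (\<integral>\<^sup>+ t. ennreal K * indicator {s..x} t \<partial>lborel)"
    unfolding lower_integral_def
    using m by (subst nn_integral_add) auto
  also have "(\<integral>\<^sup>+ t. ennreal K * indicator {s..x} t \<partial>lborel) = ennreal (K*(x-s))"
    using assms by (simp add: nn_integral_cmult_indicator ennreal_mult)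
  finally show ?thesis .
qed

theorem lemma2:
  fixes rho chi :: real and G \<phi> :: "real \<Rightarrow> real"
  assumes "rho > chi" and "chi > 1"
    and "bidding_profile rho chi G"
    and "induced_by G \<phi>"
  shows "\<exists>G' chi'. chi' \<le> chi \<and> tight_bidding_profile rho chi' G' \<and> induced_by G' \<phi>"
proof -
  have rho: "rho > 0" using assms by simp
  have Gmono: "mono G" and Glc: "\<And>x. continuous (at_left x) G" and Gpos: "\<And>x. 0 < G x"
    and Gneg: "\<And>x. x < 0 \<Longrightarrow> G x < 1" and Gge: "\<And>x. x > 0 \<Longrightarrow> G x \<ge> 1"
    and Grob: "\<And>x. lower_integral G (x + 1) \<le> ennreal (rho * G x)"
    and Gcons: "lower_integral G 1 \<le> ennreal chi"
    using assms(3) unfolding bidding_profile_def by auto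
  define S where "S = {H. mono H \<and> (\<forall>t>0. H t = G t) \<and> (\<forall>t. 0 \<le> H t \<and> H t \<le> G t)
      \<and> (\<forall>x\<le>0. lower_integral H (x+1) \<le> ennreal (rho * H x))}"
  have GS: "G \<in> S" unfolding S_def using Gmono Gpos Grob by (auto intro: less_imp_le)
  define Gs where "Gs x = (INF H\<in>S. H x)" for x
  have bdd: "bdd_below ((\<lambda>H. H x) ` S)" for x
    unfolding S_def by (intro bdd_belowI[of _ 0]) auto
  have Gs_le: "Gs x \<le> H x" if "H \<in> S" for H x
    unfolding Gs_def using bdd that by (rule cINF_lower)
  have Gs_ge: "c \<le> Gs x" if "\<And>H. H \<in> S \<Longrightarrow> c \<le> H x" for c x
    unfolding Gs_def using GS that by (intro cINF_greatest) auto
  have Gs_nn: "0 \<le> Gs x" for x by (rule Gs_ge) (auto simp: S_def)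
  have Gs_G: "Gs x \<le> G x" for x using Gs_le[OF GS] .
  have Gs_pos_eq: "Gs x = G x" if "x > 0" for x
    using Gs_G[of x] Gs_ge[of "G x" x] that by (auto simp: S_def intro: antisym)
  have Gs_mono: "mono Gs"
  proof (rule monoI)
    fix x y :: real assume "x \<le> y"
    show "Gs x \<le> Gs y"
    proof (rule Gs_ge)
      fix H assume H: "H \<in> S"
      then have "mono H" by (auto simp: S_def)
      then show "Gs x \<le> H y" using Gs_le[OF H, of x] \<open>x \<le> y\<close> by (meson monoD order_trans)
    qed
  qed
  have fin: "lower_integral Gs a = ennreal (enn2real (lower_integral Gs a))" for a
  proof -
    have "lower_integral Gs a \<le> lower_integral G (a - 1 + 1)"
      using Gs_G li_mono[of Gs G a] by simp
    also have "\<dots> \<le> ennreal (rho * G (a-1))" by (rule Grob)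
    finally have "lower_integral Gs a < top" using ennreal_less_top[of "rho * G (a-1)"] by (rule order_le_less_trans)
    then show ?thesis by simp
  qed
  have super: "lower_integral Gs (x+1) \<le> ennreal (rho * Gs x)" if "x \<le> 0" for x
  proof -
    define r where "r = enn2real (lower_integral Gs (x+1))"
    have I: "lower_integral Gs (x+1) = ennreal r" unfolding r_def using fin .
    have "r / rho \<le> Gs x"
    proof (rule Gs_ge)
      fix H assume H: "H \<in> S"
      have "ennreal r \<le> lower_integral H (x+1)" unfolding I[symmetric]
        using Gs_le[OF H] by (intro li_mono) auto
      also have "\<dots> \<le> ennreal (rho * H x)" using H that by (auto simp: S_def)
      finally have "r \<le> rho * H x" using H rho by (subst (asm) ennreal_le_iff) (auto simp: S_def)
      then show "r / rho \<le> H x" using rho by (simp add: field_simps)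
    qed
    then have "r \<le> rho * Gs x" using rho by (simp add: field_simps)
    then show ?thesis unfolding I by (rule ennreal_leI)
  qed
  define T where "T x = (if x \<le> 0 then enn2real (lower_integral Gs (x+1)) / rho else G x)" for x
  have T_le: "T x \<le> Gs x" for x
  proof (cases "x \<le> 0")
    case True
    have "enn2real (lower_integral Gs (x+1)) \<le> rho * Gs x"
      using super[OF True] Gs_nn[of x] rho by (intro enn2real_leI) auto
    then show ?thesis using True rho by (simp add: T_def field_simps)
  next
    case False then show ?thesis by (simp add: T_def Gs_pos_eq)
  qed
  have TS: "T \<in> S"
    unfolding S_def
  proof (intro CollectI conjI allI impI)
    show "mono T"
    proof (rule monoI)
      fix x y :: real assume xy: "x \<le> y"
      show "T x \<le> T y"
      proof (cases "y \<le> 0")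
        case True
        have "lower_integral Gs (x+1) \<le> lower_integral Gs (y+1)" using xy by (intro li_mono_a) auto
        then have "enn2real (lower_integral Gs (x+1)) \<le> enn2real (lower_integral Gs (y+1))"
          using fin[of "y+1"] by (intro enn2real_mono) (auto simp: less_top[symmetric] ennreal_less_top)
        then show ?thesis using True xy rho by (simp add: T_def divide_right_mono)
      next
        case False
        show ?thesis
        proof (cases "x \<le> 0")
          case True
          have "Gs x \<le> Gs y" using Gs_mono xy by (rule monoD)
          then show ?thesis using T_le[of x] False Gs_pos_eq[of y] by (simp add: T_def)
        next
          case False2: False
          then show ?thesis using False xy Gmono by (simp add: T_def monoD)
        qed
      qed
    qed
    show "T t = G t" if "t > 0" for t using that by (simp add: T_def)
    show "0 \<le> T t" for t using rho Gpos by (auto simp: T_def intro: less_imp_le)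
    show "T t \<le> G t" for t using T_le[of t] Gs_G[of t] by simp
    show "lower_integral T (x+1) \<le> ennreal (rho * T x)" if "x \<le> 0" for x
    proof -
      have "lower_integral T (x+1) \<le> lower_integral Gs (x+1)" using T_le by (intro li_mono) auto
      also have "\<dots> = ennreal (rho * T x)" using that rho fin[of "x+1"] by (simp add: T_def)
      finally show ?thesis .
    qed
  qed
  have tight: "lower_integral Gs (x+1) = ennreal (rho * Gs x)" if "x \<le> 0" for x
  proof -
    have "Gs x = T x" using Gs_le[OF TS, of x] T_le[of x] by simp
    then show ?thesis using that rho fin[of "x+1"] by (simp add: T_def)
  qed

  have zero_step: "Gs (y + 1/2) = 0" if "Gs y = 0" "y \<le> 0" for y
  proof (rule ccontr)
    assume "Gs (y + 1/2) \<noteq> 0"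
    then have c: "Gs (y + 1/2) > 0" using Gs_nn[of "y+1/2"] by simp
    have "ennreal (Gs (y + 1/2) * ((y+1) - (y+1/2))) \<le> lower_integral Gs (y+1)"
      using c by (intro li_lower) (auto intro: monoD[OF Gs_mono])
    also have "\<dots> = 0" using tight[OF that(2)] that(1) by simp
    finally show False using c by simp
  qed
  have zero_all: "Gs (y + real n / 2) = 0" if "Gs y = 0" for y n
  proof (induction n)
    case 0 then show ?case using that by simp
  next
    case (Suc n)
    show ?case
    proof (cases "y + real n / 2 \<le> 0")
      case True
      from zero_step[OF Suc True] show ?thesis by (simp add: field_simps)
    next
      case False
      then show ?thesis using Suc Gs_pos_eq[of "y + real n / 2"] Gpos[of "y + real n / 2"] by simp
    qed
  qed
  have Gs_pos: "0 < Gs x" for x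
  proof (rule ccontr)
    assume "\<not> 0 < Gs x"
    then have z: "Gs x = 0" using Gs_nn[of x] by simp
    obtain n :: nat where n: "- 2 * x < real n" using reals_Archimedean2 by blast
    have "x + real n / 2 > 0" using n by simp
    then show False using zero_all[OF z, of n] Gs_pos_eq[of "x + real n / 2"] Gpos[of "x + real n / 2"] by simp
  qed
  have Gs_lc: "continuous (at_left a) Gs" for a
  proof -
    have mGs: "\<And>x y. x \<le> y \<Longrightarrow> Gs x \<le> Gs y" using Gs_mono by (simp add: monoD)
    have mG: "\<And>x y. x \<le> y \<Longrightarrow> G x \<le> G y" using Gmono by (simp add: monoD)
    have X: "continuous (at_left a) Gs = (\<forall>\<epsilon>>0. \<exists>\<delta>>0. Gs a - Gs (a - \<delta>) < \<epsilon>)"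
      by (rule continuous_at_left_real_increasing[OF mGs])
    show ?thesis
    proof (subst X, intro allI impI)
      fix e :: real assume e: "e > 0"
      show "\<exists>d>0. Gs a - Gs (a - d) < e"
      proof (cases "a > 0")
        case True
        obtain d0 where d0: "d0 > 0" "G a - G (a - d0) < e"
          using iffD1[OF continuous_at_left_real_increasing[OF mG] Glc[of a]] e by blast
        define d where "d = min d0 (a/2)"
        have "d > 0" using d0 True by (simp add: d_def)
        moreover have "Gs a - Gs (a - d) < e"
        proof -
          have "a - d > 0" using True by (simp add: d_def)
          then have "Gs (a - d) = G (a - d)" by (rule Gs_pos_eq)
          moreover have "G (a - d0) \<le> G (a - d)" by (rule mG) (simp add: d_def)
          ultimately show ?thesis using d0 Gs_pos_eq[OF True] by simp
        qed
        ultimately show ?thesis by blast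
      next
        case False
        define K where "K = G 1"
        have K: "K > 0" using Gpos by (simp add: K_def)
        define d where "d = e * rho / (2 * K)"
        have d: "d > 0" using e rho K by (simp add: d_def)
        define s where "s = a - d"
        have s0: "s \<le> 0" using False d by (simp add: s_def)
        have "lower_integral Gs (a+1) \<le> lower_integral Gs (s+1) + ennreal (K*((a+1)-(s+1)))"
        proof (rule li_split[OF Gs_mono])
          show "s + 1 \<le> a + 1" using d by (simp add: s_def)
          show "0 \<le> K" using K by simp
          fix t assume "s + 1 < t" "t \<le> a + 1"
          then have "t \<le> 1" using False by simp
          then show "Gs t \<le> K" unfolding K_def using Gs_G[of t] mG[of t 1] by simp
        qed
        also have "\<dots> = ennreal (rho * Gs s + K * d)"
          using tight[OF s0] rho Gs_nn[of s] K d by (simp add: s_def ennreal_plus)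
        finally have "ennreal (rho * Gs a) \<le> ennreal (rho * Gs s + K * d)"
          using tight[of a] False by simp
        then have "rho * Gs a \<le> rho * Gs s + K * d"
          using rho Gs_nn[of s] K d by (subst (asm) ennreal_le_iff) auto
        also have "K * d = rho * (e/2)" using K by (simp add: d_def field_simps)
        finally have "rho * (Gs a - Gs s) \<le> rho * (e/2)" by (simp add: algebra_simps)
        then have "Gs a - Gs s \<le> e/2" using rho by simp
        then show ?thesis using d e unfolding s_def by (intro exI[of _ d]) auto
      qed
    qed
  qed
  define chi' where "chi' = enn2real (lower_integral Gs 1)"
  have chi'_eq: "lower_integral Gs 1 = ennreal chi'" unfolding chi'_def using fin .
  have "lower_integral Gs 1 \<le> lower_integral G 1" using Gs_G li_mono[of Gs G 1] by simp
  then have chi'_le: "chi' \<le> chi" using Gcons assms by (simp add: chi'_def enn2real_leI)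
  have chi'_gt: "1 < chi'"
  proof -
    define c where "c = Gs (-1/2)"
    have c: "c > 0" using Gs_pos by (simp add: c_def)
    have "(\<integral>\<^sup>+ (t::real). ennreal c * indicator {-1/2..0} t + 1 * indicator {0<..1} t \<partial>lborel)
        = ennreal c * ennreal (1/2) + 1"
      by (subst nn_integral_add) (auto simp: nn_integral_cmult_indicator)
    also have "\<dots> = ennreal (c/2 + 1)"
    proof -
      have h1: "ennreal (c*(1/2)) = ennreal c * ennreal (1/2)" using c by (intro ennreal_mult) auto
      have h2: "ennreal (c*(1/2) + 1) = ennreal (c*(1/2)) + ennreal 1" using c by (intro ennreal_plus) auto
      have "ennreal c * ennreal (1/2) + 1 = ennreal (c*(1/2) + 1)" by (simp only: h1 h2 ennreal_1)
      then show ?thesis by simp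
    qed
    finally have eq: "(\<integral>\<^sup>+ (t::real). ennreal c * indicator {-1/2..0} t + 1 * indicator {0<..1} t \<partial>lborel) = ennreal (c/2 + 1)" .
    have "(\<integral>\<^sup>+ (t::real). ennreal c * indicator {-1/2..0} t + 1 * indicator {0<..1} t \<partial>lborel) \<le> lower_integral Gs 1"
      unfolding lower_integral_def
    proof (intro nn_integral_mono)
      fix t :: real
      show "ennreal c * indicator {-1/2..0} t + 1 * indicator {0<..1} t \<le> ennreal (Gs t) * indicator {..1} t"
      proof (cases "t \<in> {-1/2..0}")
        case True
        then have "c \<le> Gs t" unfolding c_def by (intro monoD[OF Gs_mono]) auto
        then show ?thesis using True by (auto simp: indicator_def intro: ennreal_leI)
      next
        case False
        show ?thesis
        proof (cases "t \<in> {0<..1}")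
          case True
          then have "1 \<le> Gs t" using Gs_pos_eq[of t] Gge[of t] by auto
          then show ?thesis using True False by (auto simp: indicator_def intro: ennreal_leI)
        next
          case False2: False
          then show ?thesis using False by (auto simp: indicator_def)
        qed
      qed
    qed
    then have "ennreal (c/2 + 1) \<le> ennreal chi'" using eq chi'_eq by simp
    then have "c/2 + 1 \<le> chi'" using c by (subst (asm) ennreal_le_iff) (auto simp: chi'_def)
    then show ?thesis using c by simp
  qed
  have rob: "lower_integral Gs (x + 1) \<le> ennreal (rho * Gs x)" for x
  proof (cases "x \<le> 0")
    case True then show ?thesis using tight by simp
  next
    case False
    have "lower_integral Gs (x + 1) \<le> lower_integral G (x+1)" using Gs_G li_mono[of Gs G] by simp
    also have "\<dots> \<le> ennreal (rho * G x)" by (rule Grob)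
    finally show ?thesis using Gs_pos_eq[of x] False by simp
  qed
  have neg: "Gs x < 1" if "x < 0" for x using Gs_G[of x] Gneg[OF that] by simp
  have "tight_bidding_profile rho chi' Gs"
    unfolding tight_bidding_profile_def bidding_profile_def
    using chi'_gt chi'_le assms(1) Gs_mono Gs_lc Gs_pos rob tight chi'_eq
      neg Gs_pos_eq Gge
    by auto
  moreover have "induced_by Gs \<phi>" using assms(4) Gs_pos_eq by (auto simp: induced_by_def)
  ultimately show ?thesis using chi'_le by blast
qed

end
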